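(* Let $\lambda\in\mathbb R$. Each column sum of the matrix representing $(L^*+\lambda)^2$ with respect to the ordered basis $u^*_0,u^*_1,\dots,u^*_d$ of $\mathcal P_d(\mathbb R)$ equals $\lambda^2$.
   Context: Fix an integer $d\ge0$ and $r,s\in(-1,\infty)$. Write $(x)_i=x(x+1)\cdots(x+i-1)$, $(x)_0=1$. For $0\le i\le d$ put $\theta_i=(d-i)(d-i+r+s+1)$ (distinct) and $\theta^*_i=i$. Put $b^*_i=\frac{(d-i)(i-d-s)(2d-2i+r+s+2)_i}{(2d-2i+r+s)_{i+1}}$ ($0\le i\le d-1$), $c^*_i=\frac{i(i-d-r-1)(d-i+r+s+1)_{d-i}}{(d-i+r+s+2)_{d-i+1}}$ ($1\le i\le d$), $b^*_d=c^*_0=0$, $a^*_i=\theta^*_0-b^*_i-c^*_i$, $k^*_i=\frac{b^*_0\cdots b^*_{i-1}}{c^*_1\cdots c^*_i}$ ($0\le i\le d$). Put $c_i=i(i+r)$ and $\nu=\frac{\prod_{j=1}^d(\theta_0-\theta_j)}{c_1\cdots c_d}$. Let $\mathcal P_d(\mathbb R)$ be the real polynomials of degree at most $d$, each determined by its values at $\theta_0,\dots,\theta_d$. Let $L^*$ be the linear map on $\mathcal P_d(\mathbb R)$ with $(L^*f)(\theta_i)=b^*_i f(\theta_{i+1})+a^*_i f(\theta_i)+c^*_i f(\theta_{i-1})$ ($0\le i\le d$; terms with coefficient $b^*_d$ or $c^*_0$ omitted). Let $u^*_i\in\mathcal P_d(\mathbb R)$ be defined by $u^*_i(\theta_j)=0$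 for $j\neq i$ and $u^*_i(\theta_i)=\nu/k^*_i$; these form a basis. $\lambda$ denotes $\lambda$ times the identity map. *)

theory Defs
  imports Complex_Main "HOL-Computational_Algebra.Polynomial"
begin

text \<open>Polynomials in P_d(R) are elements of type real poly of degree at most d.
  All quantities depend on the fixed parameters d, r, s.\<close>

definition theta :: "nat \<Rightarrow> real \<Rightarrow> real \<Rightarrow> nat \<Rightarrow> real" where
  "theta d r s i = real (d - i) * (real (d - i) + r + s + 1)"

definition thetaS :: "nat \<Rightarrow> real" where
  "thetaS i = real i"

definition bS :: "nat \<Rightarrow> real \<Rightarrow> real \<Rightarrow> nat \<Rightarrow> real" where
  "bS d r s i = (if i < d then
     (real (d - i) * (real i - real d - s) * pochhammer (2 * real (d - i) + r + s + 2) i)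
       / pochhammer (2 * real (d - i) + r + s) (i + 1)
   else 0)"

definition cS :: "nat \<Rightarrow> real \<Rightarrow> real \<Rightarrow> nat \<Rightarrow> real" where
  "cS d r s i = (if 1 \<le> i \<and> i \<le> d then
     (real i * (real i - real d - r - 1) * pochhammer (real (d - i) + r + s + 1) (d - i))
       / pochhammer (real (d - i) + r + s + 2) (d - i + 1)
   else 0)"

definition aS :: "nat \<Rightarrow> real \<Rightarrow> real \<Rightarrow> nat \<Rightarrow> real" where
  "aS d r s i = thetaS 0 - bS d r s i - cS d r s i"

definition kS :: "nat \<Rightarrow> real \<Rightarrow> real \<Rightarrow> nat \<Rightarrow> real" where
  "kS d r s i = (\<Prod>j<i. bS d r s j) / (\<Prod>j\<in>{1..i}. cS d r s j)"

definition cc :: "real \<Rightarrow> nat \<Rightarrow> real" where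
  "cc r i = real i * (real i + r)"

definition nu :: "nat \<Rightarrow> real \<Rightarrow> real \<Rightarrow> real" where
  "nu d r s = (\<Prod>j\<in>{1..d}. theta d r s 0 - theta d r s j) / (\<Prod>j\<in>{1..d}. cc r j)"

definition interp :: "nat \<Rightarrow> real \<Rightarrow> real \<Rightarrow> (nat \<Rightarrow> real) \<Rightarrow> real poly" where
  "interp d r s v = (\<Sum>i\<le>d. smult (v i / (\<Prod>k\<in>{..d} - {i}. theta d r s i - theta d r s k))
                                 (\<Prod>k\<in>{..d} - {i}. [:- theta d r s k, 1:]))"

text \<open>The map L^* (the terms with coefficient b_d^* = 0 or c_0^* = 0 vanish).\<close>
definition Lstar :: "nat \<Rightarrow> real \<Rightarrow> real \<Rightarrow> real poly \<Rightarrow> real poly" where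
  "Lstar d r s f = interp d r s (\<lambda>i.
       bS d r s i * poly f (theta d r s (i + 1))
     + aS d r s i * poly f (theta d r s i)
     + cS d r s i * poly f (theta d r s (i - 1)))"

definition Lplus :: "nat \<Rightarrow> real \<Rightarrow> real \<Rightarrow> real \<Rightarrow> real poly \<Rightarrow> real poly" where
  "Lplus d r s lam f = Lstar d r s f + smult lam f"

definition uS :: "nat \<Rightarrow> real \<Rightarrow> real \<Rightarrow> nat \<Rightarrow> real poly" where
  "uS d r s i = interp d r s (\<lambda>j. if j = i then nu d r s / kS d r s i else 0)"

end

theory Submission
  imports Defs
begin

lemma tele:
  fixes b c f k :: "nat \<Rightarrow> real"
  assumes "b d = 0" "c 0 = 0" "\<And>i. 1 \<le> i \<Longrightarrow> i \<le> d \<Longrightarrow> k i * c i = k (i-1) * b (i-1)"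
  shows "(\<Sum>i\<le>d. k i * (b i * f (i+1) + (0 - b i - c i) * f i + c i * f (i - 1))) = 0"
proof -
  have e1: "(\<Sum>i\<le>d. k i * c i * (f (i-1) - f i)) = (\<Sum>i<d. k i * b i * (f i - f (i+1)))"
  proof -
    have "(\<Sum>i\<le>d. k i * c i * (f (i-1) - f i)) = (\<Sum>i<Suc d. k i * c i * (f (i-1) - f i))"
      using lessThan_Suc_atMost by simp
    also have "\<dots> = (\<Sum>i<d. k (Suc i) * c (Suc i) * (f i - f (Suc i)))"
      unfolding sum.lessThan_Suc_shift using assms(2) by simp
    also have "\<dots> = (\<Sum>i<d. k i * b i * (f i - f (i+1)))"
      by (rule sum.cong) (use assms(3)[of "Suc _"] in auto)
    finally show ?thesis .
  qed
  have e2: "(\<Sum>i\<le>d. k i * b i * (f (i+1) - f i)) = (\<Sum>i<d. k i * b i * (f (i+1) - f i))"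
    using assms(1) by (simp add: lessThan_Suc_atMost[symmetric])
  have "(\<Sum>i\<le>d. k i * (b i * f (i+1) + (0 - b i - c i) * f i + c i * f (i - 1)))
     = (\<Sum>i\<le>d. k i * b i * (f (i+1) - f i)) + (\<Sum>i\<le>d. k i * c i * (f (i-1) - f i))"
    by (simp add: sum.distrib[symmetric] algebra_simps)
  also have "\<dots> = 0" unfolding e1 e2 by (simp add: sum.distrib[symmetric] algebra_simps)
  finally show ?thesis .
qed

lemma theta_mono:
  assumes "r > -1" "s > -1" "i < j" "j \<le> d"
  shows "theta d r s j < theta d r s i"
proof -
  define x where "x = real (d - i)"
  define y where "y = real (d - j)"
  have "y < x" "y \<ge> 0" using assms by (auto simp: x_def y_def)
  have "x * (x + r + s + 1) - y * (y + r + s + 1) = (x - y) * (x + y + r + s + 1)" by algebra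
  moreover have "x \<ge> 1" using assms by (simp add: x_def)
  then have "x + y + r + s + 1 > 0" using \<open>y \<ge> 0\<close> assms(1,2) by linarith
  then have "(x - y) * (x + y + r + s + 1) > 0" using \<open>y < x\<close> by simp
  ultimately show ?thesis unfolding theta_def x_def[symmetric] y_def[symmetric]
    by linarith
qed

lemma theta_inj:
  assumes "r > -1" "s > -1" "i \<le> d" "j \<le> d" "theta d r s i = theta d r s j"
  shows "i = j"
proof (rule ccontr)
  assume "i \<noteq> j"
  then consider "i < j" | "j < i" by linarith
  then show False using theta_mono[OF assms(1,2)] assms(3-5) by cases fastforce+
qed

lemma interp_eval:
  assumes "r > -1" "s > -1" "k \<le> d"
  shows "poly (interp d r s v) (theta d r s k) = v k"
proof -
  let ?t = "theta d r s"
  have z: "(\<Prod>m\<in>{..d} - {i}. ?t k - ?t m) = 0" if "i \<le> d" "i \<noteq> k" for i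
    using that assms by (intro prod_zero) (auto intro!: bexI[of _ k])
  have nz: "(\<Prod>m\<in>{..d} - {k}. ?t k - ?t m) \<noteq> 0"
    using theta_inj[OF assms(1,2)] assms(3) by (auto simp: prod_zero_iff)
  have "poly (interp d r s v) (?t k) = (\<Sum>i\<le>d. v i / (\<Prod>m\<in>{..d} - {i}. ?t i - ?t m) * (\<Prod>m\<in>{..d} - {i}. ?t k - ?t m))"
    unfolding interp_def by (simp add: poly_sum poly_prod)
  also have "\<dots> = v k / (\<Prod>m\<in>{..d} - {k}. ?t k - ?t m) * (\<Prod>m\<in>{..d} - {k}. ?t k - ?t m)"
    by (subst sum.remove[of _ k]) (use z assms in \<open>auto intro!: sum.neutral\<close>)
  also have "\<dots> = v k" using nz by simp
  finally show ?thesis .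
qed

lemma bS_nz:
  assumes "r > -1" "s > -1" "i < d"
  shows "bS d r s i \<noteq> 0"
proof -
  have "real (d - i) \<ge> 1" using assms by simp
  then have p1: "pochhammer (2 * real (d - i) + r + s + 2) i > 0"
    and p2: "pochhammer (2 * real (d - i) + r + s) (i + 1) > 0"
    using assms by (auto intro!: pochhammer_pos)
  have "real i - real d - s < 0" using assms by simp
  then show ?thesis using assms p1 p2 unfolding bS_def by auto
qed

lemma cS_nz:
  assumes "r > -1" "s > -1" "1 \<le> i" "i \<le> d"
  shows "cS d r s i \<noteq> 0"
proof -
  have p1: "pochhammer (real (d - i) + r + s + 1) (d - i) \<noteq> 0"
  proof (cases "d - i = 0")
    case True then show ?thesis by simp
  next
    case False
    then have "real (d - i) \<ge> 1" by simp
    then show ?thesis using assms by (intro order.strict_implies_not_eq[symmetric] pochhammer_pos) auto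
  qed
  have p2: "pochhammer (real (d - i) + r + s + 2) (d - i + 1) > 0"
    using assms by (intro pochhammer_pos) auto
  have "real i - real d - r - 1 < 0" using assms by simp
  then show ?thesis using assms p1 p2 unfolding cS_def by auto
qed

lemma kS_nz:
  assumes "r > -1" "s > -1" "i \<le> d"
  shows "kS d r s i \<noteq> 0"
  unfolding kS_def using assms bS_nz[OF assms(1,2)] cS_nz[OF assms(1,2)]
  by (auto simp: prod_zero_iff)

lemma kS_rel:
  assumes "r > -1" "s > -1" "1 \<le> i" "i \<le> d"
  shows "kS d r s i * cS d r s i = kS d r s (i-1) * bS d r s (i-1)"
proof -
  obtain m where m: "i = Suc m" using assms(3) by (cases i) auto
  have "cS d r s i \<noteq> 0" using cS_nz assms by blast
  then show ?thesis unfolding kS_def m by simp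
qed

lemma nu_nz:
  assumes "r > -1" "s > -1"
  shows "nu d r s \<noteq> 0"
proof -
  have "theta d r s 0 - theta d r s j \<noteq> 0" if "j \<in> {1..d}" for j
    using theta_inj[OF assms, of 0 d j] that by auto
  moreover have "cc r j \<noteq> 0" if "j \<in> {1..d}" for j
  proof -
    have "real j + r > 0" using that assms by auto
    then show ?thesis using that unfolding cc_def by auto
  qed
  ultimately show ?thesis unfolding nu_def by (auto simp: prod_zero_iff)
qed

definition phi :: "nat \<Rightarrow> real \<Rightarrow> real \<Rightarrow> real poly \<Rightarrow> real" where
  "phi d r s f = (\<Sum>i\<le>d. kS d r s i * poly f (theta d r s i))"

lemma phi_Lstar:
  assumes "r > -1" "s > -1"
  shows "phi d r s (Lstar d r s f) = 0"
proof -
  have "phi d r s (Lstar d r s f) = (\<Sum>i\<le>d. kS d r s i * (bS d r s i * poly f (theta d r s (i + 1))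
     + (0 - bS d r s i - cS d r s i) * poly f (theta d r s i)
     + cS d r s i * poly f (theta d r s (i - 1))))"
    unfolding phi_def Lstar_def
    by (rule sum.cong) (auto simp: interp_eval[OF assms] aS_def thetaS_def)
  also have "\<dots> = 0"
    by (rule tele[where f = "\<lambda>i. poly f (theta d r s i)"])
       (simp add: bS_def, simp add: cS_def, rule kS_rel[OF assms], auto)
  finally show ?thesis .
qed

lemma phi_add: "phi d r s (f + g) = phi d r s f + phi d r s g"
  unfolding phi_def by (simp add: sum.distrib algebra_simps)

lemma phi_smult: "phi d r s (smult a f) = a * phi d r s f"
  unfolding phi_def by (simp add: sum_distrib_left algebra_simps)

lemma phi_sum: "phi d r s (\<Sum>i\<in>A. f i) = (\<Sum>i\<in>A. phi d r s (f i))"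
proof (induction A rule: infinite_finite_induct)
  case (insert x F) then show ?case by (simp add: phi_add)
qed (auto simp: phi_def)

lemma phi_Lplus:
  assumes "r > -1" "s > -1"
  shows "phi d r s (Lplus d r s lam f) = lam * phi d r s f"
  unfolding Lplus_def phi_add phi_smult phi_Lstar[OF assms] by simp

lemma phi_uS:
  assumes "r > -1" "s > -1" "j \<le> d"
  shows "phi d r s (uS d r s j) = nu d r s"
proof -
  have "phi d r s (uS d r s j) = (\<Sum>i\<le>d. kS d r s i * (if i = j then nu d r s / kS d r s i else 0))"
    unfolding phi_def uS_def by (rule sum.cong) (auto simp: interp_eval[OF assms(1,2)])
  also have "\<dots> = kS d r s j * (nu d r s / kS d r s j)"
    using assms(3) by (simp add: if_distrib cong: if_cong)
  also have "\<dots> = nu d r s" using kS_nz[OF assms] by simp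
  finally show ?thesis .
qed

theorem lemma2p4:
  fixes d :: nat and r s lam :: real and M :: "nat \<Rightarrow> nat \<Rightarrow> real"
  assumes "r > -1" and "s > -1"
    and "\<forall>j\<le>d. Lplus d r s lam (Lplus d r s lam (uS d r s j))
                 = (\<Sum>i\<le>d. smult (M i j) (uS d r s i))"
  shows "\<forall>j\<le>d. (\<Sum>i\<le>d. M i j) = lam ^ 2"
proof (intro allI impI)
  fix j assume j: "j \<le> d"
  have "lam ^ 2 * nu d r s = phi d r s (Lplus d r s lam (Lplus d r s lam (uS d r s j)))"
    by (simp add: phi_Lplus[OF assms(1,2)] phi_uS[OF assms(1,2) j] power2_eq_square)
  also have "\<dots> = phi d r s (\<Sum>i\<le>d. smult (M i j) (uS d r s i))"
    using assms(3) j by simp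
  also have "\<dots> = (\<Sum>i\<le>d. M i j) * nu d r s"
    by (simp add: phi_sum phi_smult phi_uS[OF assms(1,2)] sum_distrib_right)
  finally show "(\<Sum>i\<le>d. M i j) = lam ^ 2" using nu_nz[OF assms(1,2)] by simp
qed

end
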